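(* A nonnegative matrix $M\in\mathbb{R}_+^{p\times q}$ is a slack matrix of a polyhedral cone if and only if $$\{Mz : z\in\mathbb{R}_+^q\}=\{Mz: z\in\mathbb{R}^q\}\cap\mathbb{R}_+^p,$$ i.e., the cone spanned by the columns of $M$ coincides with the set of nonnegative vectors in the column span of $M$.
   Context: A matrix $S\in\mathbb{R}^{p\times q}$ is a slack matrix of a polyhedral cone $K\subseteq\mathbb{R}^n$ if there are matrices $A\in\mathbb{R}^{p\times n}$ and $B\in\mathbb{R}^{n\times q}$ with $K=\{x\in\mathbb{R}^n: x^TB\ge 0\}=\{y^TA: y\in\mathbb{R}_+^p\}$ and $S=AB$. A matrix is a slack matrix of a polyhedral cone if it is a slack matrix of some polyhedral cone. *)

theory Defs
  imports "Jordan_Normal_Form.Matrix"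
begin

definition nonneg_vec :: "real vec \<Rightarrow> bool" where
  "nonneg_vec v \<longleftrightarrow> (\<forall>i < dim_vec v. v $ i \<ge> 0)"

text \<open>S (p x q) is a slack matrix of the polyhedral cone K in R^n: there are A (p x n) and
 B (n x q) with K = {x. x^T B \<ge> 0} = {y^T A. y \<ge> 0} and S = A B.
 Row vectors x^T B and y^T A are represented by the column vectors B^T x and A^T y.\<close>

definition slack_matrix_of_cone :: "real mat \<Rightarrow> nat \<Rightarrow> real vec set \<Rightarrow> bool" where
  "slack_matrix_of_cone S n K \<longleftrightarrow>
     (\<exists>A B. A \<in> carrier_mat (dim_row S) n \<and> B \<in> carrier_mat n (dim_col S) \<and>
        K = {x \<in> carrier_vec n. nonneg_vec (transpose_mat B *\<^sub>v x)} \<and>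
        K = {transpose_mat A *\<^sub>v y | y. y \<in> carrier_vec (dim_row S) \<and> nonneg_vec y} \<and>
        S = A * B)"

definition is_slack_matrix_of_polyhedral_cone :: "real mat \<Rightarrow> bool" where
  "is_slack_matrix_of_polyhedral_cone S \<longleftrightarrow> (\<exists>n K. slack_matrix_of_cone S n K)"

end

theory Submission
  imports Defs
begin

definition dot :: "nat \<Rightarrow> (nat \<Rightarrow> real) \<Rightarrow> (nat \<Rightarrow> real) \<Rightarrow> real" where
  "dot n x y = (\<Sum>k<n. x k * y k)"

lemma dot_lin1: "dot n (\<lambda>k. x k - t * y k) z = dot n x z - t * dot n y z"
  unfolding dot_def by (simp add: algebra_simps sum_subtractf sum_distrib_left)

lemma dot_lin2: "dot n z (\<lambda>k. x k - t * y k) = dot n z x - t * dot n z y"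
  unfolding dot_def by (simp add: algebra_simps sum_subtractf sum_distrib_left)

lemma farkas:
  fixes m n :: nat and a :: "nat \<Rightarrow> nat \<Rightarrow> real" and b :: "nat \<Rightarrow> real"
  shows
  "(\<exists>l. (\<forall>i<m. l i \<ge> 0) \<and> (\<forall>k<n. b k = (\<Sum>i<m. l i * a i k))) \<or>
   (\<exists>w. (\<forall>i<m. dot n (a i) w \<ge> 0) \<and> dot n b w < 0)"
proof (induction m arbitrary: a b)
  case 0
  show ?case
  proof (cases "\<forall>k<n. b k = 0")
    case True then show ?thesis by auto
  next
    case False
    then obtain k0 where k0: "k0 < n" "b k0 \<noteq> 0" by auto
    have "(\<Sum>k<n. b k * b k) > 0"
      by (rule sum_pos2[of _ k0]) (use k0 in \<open>auto simp: zero_less_mult_iff\<close>)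
    hence "dot n b (\<lambda>k. - b k) < 0" unfolding dot_def by (simp add: sum_negf)
    then show ?thesis by auto
  qed
next
  case (Suc m)
  from Suc.IH[where a=a and b=b] show ?case
  proof
    assume "\<exists>l. (\<forall>i<m. l i \<ge> 0) \<and> (\<forall>k<n. b k = (\<Sum>i<m. l i * a i k))"
    then obtain l where l: "\<forall>i<m. l i \<ge> 0" "\<forall>k<n. b k = (\<Sum>i<m. l i * a i k)" by blast
    show ?thesis
      by (rule disjI1, rule exI[of _ "l(m := 0)"]) (use l in \<open>auto simp: less_Suc_eq\<close>)
  next
    assume "\<exists>w. (\<forall>i<m. dot n (a i) w \<ge> 0) \<and> dot n b w < 0"
    then obtain w where w: "\<forall>i<m. dot n (a i) w \<ge> 0" "dot n b w < 0" by blast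
    show ?thesis
    proof (cases "dot n (a m) w \<ge> 0")
      case True
      then show ?thesis using w by (auto simp: less_Suc_eq intro!: exI[of _ w])
    next
      case False
      define c where "c = dot n (a m) w"
      have c: "c < 0" using False c_def by auto
      define a' where "a' = (\<lambda>i k. a i k - (dot n (a i) w / c) * a m k)"
      define b' where "b' = (\<lambda>k. b k - (dot n b w / c) * a m k)"
      from Suc.IH[where a="a'" and b="b'"] show ?thesis
      proof
        assume "\<exists>l. (\<forall>i<m. l i \<ge> 0) \<and> (\<forall>k<n. b' k = (\<Sum>i<m. l i * a' i k))"
        then obtain l where l: "\<forall>i<m. l i \<ge> 0" "\<forall>k<n. b' k = (\<Sum>i<m. l i * a' i k)" by blast
        define S where "S = (\<Sum>i<m. l i * dot n (a i) w)"
        have S: "S \<ge> 0" unfolding S_def using l w by (auto intro!: sum_nonneg)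
        define L where "L = l(m := (dot n b w - S) / c)"
        have "L m \<ge> 0" unfolding L_def using S w c
          by (simp add: divide_nonpos_neg)
        hence "\<forall>i<Suc m. L i \<ge> 0" using l by (auto simp: L_def less_Suc_eq)
        moreover have "\<forall>k<n. b k = (\<Sum>i<Suc m. L i * a i k)"
        proof (intro allI impI)
          fix k assume k: "k < n"
          have "b k = b' k + (dot n b w / c) * a m k" by (simp add: b'_def)
          also have "b' k = (\<Sum>i<m. l i * a i k) - S / c * a m k"
            using l(2) k unfolding a'_def S_def
            by (simp add: algebra_simps sum_subtractf sum_distrib_left sum_distrib_right sum_divide_distrib)
          finally have "b k = (\<Sum>i<m. l i * a i k) + ((dot n b w - S) / c) * a m k"
            by (simp add: diff_divide_distrib algebra_simps)
          also have "\<dots> = (\<Sum>i<Suc m. L i * a i k)"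
            by (simp add: L_def)
          finally show "b k = (\<Sum>i<Suc m. L i * a i k)" .
        qed
        ultimately show ?thesis by blast
      next
        assume "\<exists>w'. (\<forall>i<m. dot n (a' i) w' \<ge> 0) \<and> dot n b' w' < 0"
        then obtain w' where w': "\<forall>i<m. dot n (a' i) w' \<ge> 0" "dot n b' w' < 0" by blast
        define w'' where "w'' = (\<lambda>k. w' k - (dot n (a m) w' / c) * w k)"
        have "\<forall>i<Suc m. dot n (a i) w'' \<ge> 0"
        proof (intro allI impI)
          fix i assume "i < Suc m"
          then consider "i < m" | "i = m" by linarith
          then show "dot n (a i) w'' \<ge> 0"
          proof cases
            case 1
            have "dot n (a' i) w' = dot n (a i) w''"
              unfolding a'_def w''_def dot_lin1 dot_lin2 by (simp add: c_def algebra_simps)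
            then show ?thesis using w' 1 by auto
          next
            case 2
            have "dot n (a i) w'' = 0"
              unfolding w''_def dot_lin2 using c 2 by (simp add: c_def)
            then show ?thesis by simp
          qed
        qed
        moreover have "dot n b w'' < 0"
        proof -
          have "dot n b' w' = dot n b w''"
            unfolding b'_def w''_def dot_lin1 dot_lin2 by (simp add: c_def algebra_simps)
          then show ?thesis using w' by auto
        qed
        ultimately show ?thesis by blast
      qed
    qed
  qed
qed

lemma not_rowspace:
  fixes B :: "nat \<Rightarrow> nat \<Rightarrow> real" and m :: "nat \<Rightarrow> real"
  assumes "\<not> (\<exists>c. \<forall>j<q. m j = (\<Sum>k<r. c k * B k j))"
  shows "\<exists>z. (\<forall>k<r. (\<Sum>j<q. B k j * z j) = 0) \<and> (\<Sum>j<q. m j * z j) = 1"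
proof -
  define a where "a = (\<lambda>i j. if i < r then B i j else - B (i - r) j)"
  have split: "(\<Sum>i<r+r. f i) = (\<Sum>i<r. f i) + (\<Sum>i<r. f (i + r))" for f :: "nat \<Rightarrow> real"
  proof -
    have "{..<r+r} = {..<r} \<union> {r..<r+r}" by auto
    hence "(\<Sum>i<r+r. f i) = (\<Sum>i<r. f i) + (\<Sum>i\<in>{r..<r+r}. f i)"
      by (simp add: sum.union_disjoint[symmetric] ivl_disj_int)
    also have "(\<Sum>i\<in>{r..<r+r}. f i) = (\<Sum>i<r. f (i + r))"
      using sum.shift_bounds_nat_ivl[of f 0 r r] by (simp add: lessThan_atLeast0)
    finally show ?thesis .
  qed
  from farkas[of "r+r" q m a] show ?thesis
  proof
    assume "\<exists>l. (\<forall>i<r+r. l i \<ge> 0) \<and> (\<forall>k<q. m k = (\<Sum>i<r+r. l i * a i k))"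
    then obtain l where l: "\<forall>k<q. m k = (\<Sum>i<r+r. l i * a i k)" by blast
    have "\<forall>j<q. m j = (\<Sum>k<r. (l k - l (k + r)) * B k j)"
    proof (intro allI impI)
      fix j assume j: "j < q"
      have "m j = (\<Sum>i<r. l i * B i j) + (\<Sum>i<r. l (i + r) * (- B i j))"
        using l j by (simp add: split a_def)
      also have "\<dots> = (\<Sum>k<r. (l k - l (k + r)) * B k j)"
        by (simp add: sum_subtractf sum_negf left_diff_distrib)
      finally show "m j = (\<Sum>k<r. (l k - l (k + r)) * B k j)" .
    qed
    hence "\<exists>c. \<forall>j<q. m j = (\<Sum>k<r. c k * B k j)" by (rule exI[where x="\<lambda>k. l k - l (k + r)"])
    with assms show ?thesis by (rule notE)
  next
    assume "\<exists>w. (\<forall>i<r+r. dot q (a i) w \<ge> 0) \<and> dot q m w < 0"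
    then obtain w where w: "\<forall>i<r+r. dot q (a i) w \<ge> 0" "dot q m w < 0" by blast
    have "\<forall>k<r. (\<Sum>j<q. B k j * w j) = 0"
    proof (intro allI impI)
      fix k assume k: "k < r"
      have "dot q (a k) w \<ge> 0" "dot q (a (k + r)) w \<ge> 0" using w k by auto
      then show "(\<Sum>j<q. B k j * w j) = 0" using k by (simp add: a_def dot_def sum_negf)
    qed
    moreover have "(\<Sum>j<q. f j * (w j / d)) = (\<Sum>j<q. f j * w j) / d" for f :: "nat \<Rightarrow> real" and d
      by (simp add: sum_divide_distrib)
    ultimately show ?thesis using w(2)
      by (intro exI[of _ "\<lambda>j. w j / dot q m w"]) (auto simp: dot_def)
  qed
qed

definition injA :: "nat \<Rightarrow> nat \<Rightarrow> (nat \<Rightarrow> nat \<Rightarrow> real) \<Rightarrow> bool" where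
  "injA p r A \<longleftrightarrow> (\<forall>w. (\<forall>i<p. (\<Sum>k<r. A i k * w k) = 0) \<longrightarrow> (\<forall>k<r. w k = 0))"

definition surjB :: "nat \<Rightarrow> nat \<Rightarrow> (nat \<Rightarrow> nat \<Rightarrow> real) \<Rightarrow> bool" where
  "surjB r q B \<longleftrightarrow> (\<forall>w. \<exists>z. \<forall>k<r. (\<Sum>j<q. B k j * z j) = w k)"

lemma rank_fact:
  fixes M :: "nat \<Rightarrow> nat \<Rightarrow> real" and p q :: nat
  shows "\<exists>r A B. (\<forall>i<p. \<forall>j<q. M i j = (\<Sum>k<r. A i k * B k j)) \<and> injA p r A \<and> surjB r q B"
proof (induction p)
  case 0
  show ?case by (rule exI[of _ 0]) (auto simp: injA_def surjB_def)
next
  case (Suc p)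
  then obtain r A B where fac: "\<forall>i<p. \<forall>j<q. M i j = (\<Sum>k<r. A i k * B k j)"
    and iA: "injA p r A" and sB: "surjB r q B" by blast
  show ?case
  proof (cases "\<exists>c. \<forall>j<q. M p j = (\<Sum>k<r. c k * B k j)")
    case True
    then obtain c where c: "\<forall>j<q. M p j = (\<Sum>k<r. c k * B k j)" by blast
    define A' where "A' = A(p := c)"
    have "\<forall>i<Suc p. \<forall>j<q. M i j = (\<Sum>k<r. A' i k * B k j)"
      using fac c by (auto simp: A'_def less_Suc_eq)
    moreover have "injA (Suc p) r A'"
      using iA unfolding injA_def A'_def by auto
    ultimately show ?thesis using sB by (intro exI[of _ r] exI[of _ A'] exI[of _ B] conjI)
  next
    case False
    from not_rowspace[OF False] obtain z1 where
      z1: "\<forall>k<r. (\<Sum>j<q. B k j * z1 j) = 0" "(\<Sum>j<q. M p j * z1 j) = 1" by blast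
    define A' where "A' = (\<lambda>i k. if i = p then (if k = r then 1 else 0) else (if k = r then 0 else A i k))"
    define B' where "B' = (\<lambda>k j. if k = r then M p j else B k j)"
    have "\<forall>i<Suc p. \<forall>j<q. M i j = (\<Sum>k<Suc r. A' i k * B' k j)"
      using fac by (auto simp: A'_def B'_def less_Suc_eq)
    moreover have "injA (Suc p) (Suc r) A'"
      unfolding injA_def
    proof (intro allI impI)
      fix w k assume h: "\<forall>i<Suc p. (\<Sum>k<Suc r. A' i k * w k) = 0" and k: "k < Suc r"
      have wr: "w r = 0" using h[rule_format, of p] by (simp add: A'_def)
      have "\<forall>i<p. (\<Sum>k<r. A i k * w k) = 0"
      proof (intro allI impI)
        fix i assume i: "i < p"
        have "(\<Sum>k<Suc r. A' i k * w k) = 0" using h i by auto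
        moreover have "(\<Sum>k<r. A' i k * w k) = (\<Sum>k<r. A i k * w k)"
          using i by (intro sum.cong) (auto simp: A'_def)
        ultimately show "(\<Sum>k<r. A i k * w k) = 0" using i by (simp add: A'_def)
      qed
      hence "\<forall>k<r. w k = 0" using iA unfolding injA_def by blast
      then show "w k = 0" using wr k by (auto simp: less_Suc_eq)
    qed
    moreover have "surjB (Suc r) q B'"
      unfolding surjB_def
    proof
      fix w
      obtain z0 where z0: "\<forall>k<r. (\<Sum>j<q. B k j * z0 j) = w k" using sB unfolding surjB_def by blast
      define t where "t = w r - (\<Sum>j<q. M p j * z0 j)"
      define z where "z = (\<lambda>j. z0 j + t * z1 j)"
      have "\<forall>k<Suc r. (\<Sum>j<q. B' k j * z j) = w k"
      proof (intro allI impI)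
        fix k assume k: "k < Suc r"
        show "(\<Sum>j<q. B' k j * z j) = w k"
        proof (cases "k = r")
          case True
          have "(\<Sum>j<q. M p j * z j) = (\<Sum>j<q. M p j * z0 j) + t * (\<Sum>j<q. M p j * z1 j)"
            by (simp add: z_def algebra_simps sum.distrib sum_distrib_left)
          then show ?thesis using True z1 by (simp add: B'_def t_def)
        next
          case False
          hence kr: "k < r" using k by auto
          have "(\<Sum>j<q. B k j * z j) = (\<Sum>j<q. B k j * z0 j) + t * (\<Sum>j<q. B k j * z1 j)"
            by (simp add: z_def algebra_simps sum.distrib sum_distrib_left)
          then show ?thesis using False kr z0 z1 by (simp add: B'_def)
        qed
      qed
      then show "\<exists>z. \<forall>k<Suc r. (\<Sum>j<q. B' k j * z j) = w k" by blast
    qed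
    ultimately show ?thesis by (intro exI[of _ "Suc r"] exI[of _ A'] exI[of _ B'] conjI)
  qed
qed

lemma swap_sum:
  fixes f h :: "nat \<Rightarrow> real" and g :: "nat \<Rightarrow> nat \<Rightarrow> real"
  shows "(\<Sum>k<n. f k * (\<Sum>j<q. g k j * h j)) = (\<Sum>j<q. h j * (\<Sum>k<n. g k j * f k))"
  by (simp add: sum_distrib_left sum.swap[of _ "{..<n}"] algebra_simps)

lemma mv_idx:
  assumes "X \<in> carrier_mat a b" "v \<in> carrier_vec b" "i < a"
  shows "(X *\<^sub>v v) $ i = (\<Sum>j<b. X $$ (i, j) * v $ j)"
  using assms by (simp add: scalar_prod_def atLeast0LessThan)

lemma mm_idx:
  assumes "X \<in> carrier_mat a n" "Y \<in> carrier_mat n b" "i < a" "j < b"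
  shows "(X * Y) $$ (i, j) = (\<Sum>k<n. X $$ (i, k) * Y $$ (k, j))"
  using assms by (simp add: scalar_prod_def atLeast0LessThan)

theorem corollary2p3:
  fixes M :: "real mat" and p q :: nat
  assumes "M \<in> carrier_mat p q"
    and "\<forall>i < p. \<forall>j < q. M $$ (i, j) \<ge> 0"
  shows "is_slack_matrix_of_polyhedral_cone M \<longleftrightarrow>
    {M *\<^sub>v z | z. z \<in> carrier_vec q \<and> nonneg_vec z} =
    {M *\<^sub>v z | z. z \<in> carrier_vec q} \<inter> {v \<in> carrier_vec p. nonneg_vec v}"
proof -
  have dM: "dim_row M = p" "dim_col M = q" using assms(1) by auto
  let ?L = "{M *\<^sub>v z | z. z \<in> carrier_vec q \<and> nonneg_vec z}"
  let ?R = "{M *\<^sub>v z | z. z \<in> carrier_vec q} \<inter> {v \<in> carrier_vec p. nonneg_vec v}"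
  have LR: "?L \<subseteq> ?R"
  proof
    fix v assume "v \<in> ?L"
    then obtain z where z: "z \<in> carrier_vec q" "nonneg_vec z" "v = M *\<^sub>v z" by blast
    have "nonneg_vec v"
      unfolding nonneg_vec_def
    proof (intro allI impI)
      fix i assume "i < dim_vec v"
      hence i: "i < p" using z dM by simp
      have "v $ i = (\<Sum>j<q. M $$ (i, j) * z $ j)" using mv_idx[OF assms(1) z(1) i] z by simp
      also have "\<dots> \<ge> 0" using assms(2) i z(1,2) by (auto simp: nonneg_vec_def intro!: sum_nonneg)
      finally show "v $ i \<ge> 0" .
    qed
    moreover have "v \<in> carrier_vec p" unfolding z(3) by (rule mult_mat_vec_carrier[OF assms(1) z(1)])
    ultimately show "v \<in> ?R" using z by blast
  qed
  show ?thesis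
  proof
    assume "is_slack_matrix_of_polyhedral_cone M"
    then obtain n K A B where A: "A \<in> carrier_mat p n" and B: "B \<in> carrier_mat n q"
      and K1: "K = {x \<in> carrier_vec n. nonneg_vec (transpose_mat B *\<^sub>v x)}"
      and K2: "K = {transpose_mat A *\<^sub>v y | y. y \<in> carrier_vec p \<and> nonneg_vec y}"
      and MAB: "M = A * B"
      unfolding is_slack_matrix_of_polyhedral_cone_def slack_matrix_of_cone_def dM by blast
    have Mij: "M $$ (i, j) = (\<Sum>k<n. A $$ (i, k) * B $$ (k, j))" if "i < p" "j < q" for i j
      using mm_idx[OF A B that] MAB by simp
    have "?R \<subseteq> ?L"
    proof
      fix v assume "v \<in> ?R"
      then obtain z where z: "z \<in> carrier_vec q" "v = M *\<^sub>v z" and v: "v \<in> carrier_vec p" "nonneg_vec v"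
        by blast
      have vi: "v $ i = (\<Sum>j<q. M $$ (i, j) * z $ j)" if "i < p" for i
        using mv_idx[OF assms(1) z(1) that] z by simp
      define w where "w = (\<lambda>k. \<Sum>j<q. B $$ (k, j) * z $ j)"
      from farkas[of q n w "\<lambda>j k. B $$ (k, j)"] show "v \<in> ?L"
      proof
        assume "\<exists>l. (\<forall>i<q. l i \<ge> 0) \<and> (\<forall>k<n. w k = (\<Sum>i<q. l i * B $$ (k, i)))"
        then obtain l where l: "\<forall>i<q. l i \<ge> 0" "\<forall>k<n. w k = (\<Sum>i<q. l i * B $$ (k, i))" by blast
        define z' where "z' = vec q l"
        have z': "z' \<in> carrier_vec q" "nonneg_vec z'" using l by (auto simp: z'_def nonneg_vec_def)
        have "v = M *\<^sub>v z'"
        proof (rule eq_vecI)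
          show "dim_vec v = dim_vec (M *\<^sub>v z')" using v dM by simp
          fix i assume "i < dim_vec (M *\<^sub>v z')"
          hence i: "i < p" using dM by simp
          have "(M *\<^sub>v z') $ i = (\<Sum>j<q. M $$ (i, j) * l j)"
            using mv_idx[OF assms(1) z'(1) i] by (simp add: z'_def)
          also have "\<dots> = (\<Sum>j<q. l j * (\<Sum>k<n. B $$ (k, j) * A $$ (i, k)))"
            using i by (simp add: Mij mult.commute)
          also have "\<dots> = (\<Sum>k<n. A $$ (i, k) * (\<Sum>j<q. B $$ (k, j) * l j))"
            by (rule swap_sum[symmetric])
          also have "\<dots> = (\<Sum>k<n. A $$ (i, k) * w k)"
            using l(2) by (intro sum.cong) (auto simp: mult.commute)
          also have "\<dots> = (\<Sum>j<q. z $ j * (\<Sum>k<n. B $$ (k, j) * A $$ (i, k)))"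
            unfolding w_def by (rule swap_sum)
          also have "\<dots> = v $ i"
            using i by (simp add: vi Mij mult.commute)
          finally show "v $ i = (M *\<^sub>v z') $ i" by simp
        qed
        then show ?thesis using z' by blast
      next
        assume "\<exists>u. (\<forall>i<q. dot n (\<lambda>k. B $$ (k, i)) u \<ge> 0) \<and> dot n w u < 0"
        then obtain u where u: "\<forall>j<q. dot n (\<lambda>k. B $$ (k, j)) u \<ge> 0" "dot n w u < 0" by blast
        have "vec n u \<in> K"
          unfolding K1
        proof (intro CollectI conjI)
          show "vec n u \<in> carrier_vec n" by simp
          show "nonneg_vec (transpose_mat B *\<^sub>v vec n u)"
            unfolding nonneg_vec_def
          proof (intro allI impI)
            fix j assume "j < dim_vec (transpose_mat B *\<^sub>v vec n u)"
            hence j: "j < q" using B by simp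
            have "(transpose_mat B *\<^sub>v vec n u) $ j = dot n (\<lambda>k. B $$ (k, j)) u"
              using mv_idx[of "transpose_mat B" q n "vec n u" j] B j by (simp add: dot_def)
            then show "(transpose_mat B *\<^sub>v vec n u) $ j \<ge> 0" using u j by simp
          qed
        qed
        then obtain y where y: "y \<in> carrier_vec p" "nonneg_vec y" "vec n u = transpose_mat A *\<^sub>v y"
          unfolding K2 by blast
        have uk: "u k = (\<Sum>i<p. A $$ (i, k) * y $ i)" if "k < n" for k
        proof -
          have "u k = vec n u $ k" using that by simp
          also have "\<dots> = (\<Sum>i<p. A $$ (i, k) * y $ i)"
            unfolding y(3) using mv_idx[of "transpose_mat A" n p y k] A y that by simp
          finally show ?thesis .
        qed
        have "dot n w u = (\<Sum>k<n. u k * (\<Sum>j<q. B $$ (k, j) * z $ j))"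
          unfolding dot_def w_def by (simp add: mult.commute)
        also have "\<dots> = (\<Sum>k<n. (\<Sum>i<p. A $$ (i, k) * y $ i) * (\<Sum>j<q. B $$ (k, j) * z $ j))"
          by (intro sum.cong) (auto simp: uk)
        also have "\<dots> = (\<Sum>k<n. (\<Sum>i<p. y $ i * (A $$ (i, k) * (\<Sum>j<q. B $$ (k, j) * z $ j))))"
          by (simp add: sum_distrib_right algebra_simps)
        also have "\<dots> = (\<Sum>i<p. y $ i * (\<Sum>k<n. A $$ (i, k) * (\<Sum>j<q. B $$ (k, j) * z $ j)))"
          by (simp add: sum.swap[of _ "{..<n}"] sum_distrib_left)
        also have "\<dots> = (\<Sum>i<p. y $ i * v $ i)"
        proof (intro sum.cong refl)
          fix i assume "i \<in> {..<p}"
          hence i: "i < p" by simp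
          have "(\<Sum>k<n. A $$ (i, k) * (\<Sum>j<q. B $$ (k, j) * z $ j))
              = (\<Sum>j<q. z $ j * (\<Sum>k<n. B $$ (k, j) * A $$ (i, k)))" by (rule swap_sum)
          also have "\<dots> = v $ i" using i by (simp add: vi Mij mult.commute)
          finally show "y $ i * (\<Sum>k<n. A $$ (i, k) * (\<Sum>j<q. B $$ (k, j) * z $ j)) = y $ i * v $ i"
            by simp
        qed
        also have "\<dots> \<ge> 0" using y v by (auto simp: nonneg_vec_def intro!: sum_nonneg)
        finally show ?thesis using u(2) by simp
      qed
    qed
    then show "?L = ?R" using LR by blast
  next
    assume H: "?L = ?R"
    obtain r Af Bf where fac: "\<forall>i<p. \<forall>j<q. M $$ (i, j) = (\<Sum>k<r. Af i k * Bf k j)"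
      and iA: "injA p r Af" and sB: "surjB r q Bf"
      using rank_fact[of p q "\<lambda>i j. M $$ (i, j)"] by blast
    define A where "A = mat p r (\<lambda>(i, k). Af i k)"
    define B where "B = mat r q (\<lambda>(k, j). Bf k j)"
    have A: "A \<in> carrier_mat p r" and B: "B \<in> carrier_mat r q" by (auto simp: A_def B_def)
    define K where "K = {x \<in> carrier_vec r. nonneg_vec (transpose_mat B *\<^sub>v x)}"
    have BT: "(transpose_mat B *\<^sub>v x) $ j = (\<Sum>k<r. Bf k j * x $ k)"
      if "x \<in> carrier_vec r" "j < q" for x j
      using mv_idx[of "transpose_mat B" q r x j] B that by (simp add: B_def)
    have AT: "(transpose_mat A *\<^sub>v y) $ k = (\<Sum>i<p. Af i k * y $ i)"
      if "y \<in> carrier_vec p" "k < r" for y k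
      using mv_idx[of "transpose_mat A" r p y k] A that by (simp add: A_def)
    have MAB: "M = A * B"
    proof (rule eq_matI)
      fix i j assume "i < dim_row (A * B)" "j < dim_col (A * B)"
      hence ij: "i < p" "j < q" using A B by auto
      show "M $$ (i, j) = (A * B) $$ (i, j)"
        using mm_idx[OF A B ij] fac ij by (simp add: A_def B_def)
    qed (use A B dM in auto)
    have "K = {transpose_mat A *\<^sub>v y | y. y \<in> carrier_vec p \<and> nonneg_vec y}"
    proof
      show "{transpose_mat A *\<^sub>v y | y. y \<in> carrier_vec p \<and> nonneg_vec y} \<subseteq> K"
      proof
        fix x assume "x \<in> {transpose_mat A *\<^sub>v y | y. y \<in> carrier_vec p \<and> nonneg_vec y}"
        then obtain y where y: "y \<in> carrier_vec p" "nonneg_vec y" "x = transpose_mat A *\<^sub>v y" by blast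
        have xc: "x \<in> carrier_vec r" using y A by simp
        have "nonneg_vec (transpose_mat B *\<^sub>v x)"
          unfolding nonneg_vec_def
        proof (intro allI impI)
          fix j assume "j < dim_vec (transpose_mat B *\<^sub>v x)"
          hence j: "j < q" using B by simp
          have "(transpose_mat B *\<^sub>v x) $ j = (\<Sum>k<r. Bf k j * (\<Sum>i<p. Af i k * y $ i))"
            using BT[OF xc j] by (simp add: y(3) AT[OF y(1)])
          also have "\<dots> = (\<Sum>i<p. y $ i * (\<Sum>k<r. Af i k * Bf k j))"
            by (rule swap_sum[where n=r and q=p and g="\<lambda>k i. Af i k" and f="\<lambda>k. Bf k j" and h="\<lambda>i. y $ i"])
          also have "\<dots> = (\<Sum>i<p. y $ i * M $$ (i, j))" using fac j by simp
          also have "\<dots> \<ge> 0" using y assms(2) j by (auto simp: nonneg_vec_def intro!: sum_nonneg)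
          finally show "(transpose_mat B *\<^sub>v x) $ j \<ge> 0" .
        qed
        then show "x \<in> K" using xc by (simp add: K_def)
      qed
    next
      show "K \<subseteq> {transpose_mat A *\<^sub>v y | y. y \<in> carrier_vec p \<and> nonneg_vec y}"
      proof
        fix x assume "x \<in> K"
        hence x: "x \<in> carrier_vec r" "nonneg_vec (transpose_mat B *\<^sub>v x)" by (auto simp: K_def)
        have xj: "(\<Sum>k<r. Bf k j * x $ k) \<ge> 0" if "j < q" for j
          using x(2) that B BT[OF x(1) that] by (auto simp: nonneg_vec_def)
        from farkas[of p r "\<lambda>k. x $ k" Af]
        show "x \<in> {transpose_mat A *\<^sub>v y | y. y \<in> carrier_vec p \<and> nonneg_vec y}"
        proof
          assume "\<exists>l. (\<forall>i<p. l i \<ge> 0) \<and> (\<forall>k<r. x $ k = (\<Sum>i<p. l i * Af i k))"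
          then obtain l where l: "\<forall>i<p. l i \<ge> 0" "\<forall>k<r. x $ k = (\<Sum>i<p. l i * Af i k)" by blast
          have "x = transpose_mat A *\<^sub>v vec p l"
          proof (rule eq_vecI)
            show "dim_vec x = dim_vec (transpose_mat A *\<^sub>v vec p l)" using x A by simp
            fix k assume "k < dim_vec (transpose_mat A *\<^sub>v vec p l)"
            hence k: "k < r" using A by simp
            show "x $ k = (transpose_mat A *\<^sub>v vec p l) $ k"
              using AT[of "vec p l" k] k l(2) by (simp add: mult.commute)
          qed
          moreover have "vec p l \<in> carrier_vec p" "nonneg_vec (vec p l)"
            using l by (auto simp: nonneg_vec_def)
          ultimately show ?thesis by blast
        next
          assume "\<exists>w. (\<forall>i<p. dot r (Af i) w \<ge> 0) \<and> dot r (\<lambda>k. x $ k) w < 0"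
          then obtain w where w: "\<forall>i<p. dot r (Af i) w \<ge> 0" "dot r (\<lambda>k. x $ k) w < 0" by blast
          obtain z where z: "\<forall>k<r. (\<Sum>j<q. Bf k j * z j) = w k" using sB unfolding surjB_def by blast
          define v where "v = M *\<^sub>v vec q z"
          have vi: "v $ i = dot r (Af i) w" if "i < p" for i
          proof -
            have "v $ i = (\<Sum>j<q. M $$ (i, j) * z j)"
              using mv_idx[OF assms(1), of "vec q z" i] that by (simp add: v_def)
            also have "\<dots> = (\<Sum>j<q. z j * (\<Sum>k<r. Bf k j * Af i k))"
              using fac that by (simp add: mult.commute)
            also have "\<dots> = (\<Sum>k<r. Af i k * (\<Sum>j<q. Bf k j * z j))"
              by (rule swap_sum[symmetric])
            also have "\<dots> = dot r (Af i) w" using z by (simp add: dot_def)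
            finally show ?thesis .
          qed
          have vc: "v \<in> carrier_vec p" unfolding v_def by (rule mult_mat_vec_carrier[OF assms(1)]) simp
          have nn: "nonneg_vec v" unfolding nonneg_vec_def
          proof (intro allI impI)
            fix i assume "i < dim_vec v"
            hence "i < p" using vc by simp
            then show "v $ i \<ge> 0" using vi w by simp
          qed
          have v1: "v \<in> {M *\<^sub>v z | z. z \<in> carrier_vec q}"
            unfolding v_def by (rule CollectI, rule exI[of _ "vec q z"]) simp
          have "v \<in> ?R" by (rule IntI[OF v1]) (use vc nn in simp)
          hence "v \<in> ?L" using H by simp
          then obtain z' where z': "z' \<in> carrier_vec q" "nonneg_vec z'" "v = M *\<^sub>v z'" by blast
          define d where "d = (\<lambda>k. w k - (\<Sum>j<q. Bf k j * z' $ j))"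
          have "\<forall>i<p. (\<Sum>k<r. Af i k * d k) = 0"
          proof (intro allI impI)
            fix i assume i: "i < p"
            have "v $ i = (\<Sum>j<q. M $$ (i, j) * z' $ j)"
              using mv_idx[OF assms(1) z'(1) i] z' by simp
            also have "\<dots> = (\<Sum>j<q. z' $ j * (\<Sum>k<r. Bf k j * Af i k))"
              using fac i by (simp add: mult.commute)
            also have "\<dots> = (\<Sum>k<r. Af i k * (\<Sum>j<q. Bf k j * z' $ j))"
              by (rule swap_sum[symmetric])
            finally have "(\<Sum>k<r. Af i k * (\<Sum>j<q. Bf k j * z' $ j)) = (\<Sum>k<r. Af i k * w k)"
              using vi[OF i] by (simp add: dot_def)
            then show "(\<Sum>k<r. Af i k * d k) = 0"
              by (simp add: d_def right_diff_distrib sum_subtractf)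
          qed
          hence d0: "\<forall>k<r. d k = 0" using iA unfolding injA_def by blast
          have "dot r (\<lambda>k. x $ k) w = (\<Sum>k<r. x $ k * (\<Sum>j<q. Bf k j * z' $ j))"
            unfolding dot_def using d0 by (intro sum.cong) (auto simp: d_def)
          also have "\<dots> = (\<Sum>j<q. z' $ j * (\<Sum>k<r. Bf k j * x $ k))" by (rule swap_sum)
          also have "\<dots> \<ge> 0" using z' xj by (auto simp: nonneg_vec_def intro!: sum_nonneg)
          finally show ?thesis using w(2) by simp
        qed
      qed
    qed
    hence "slack_matrix_of_cone M r K"
      unfolding slack_matrix_of_cone_def dM using A B MAB K_def by blast
    then show "is_slack_matrix_of_polyhedral_cone M"
      unfolding is_slack_matrix_of_polyhedral_cone_def by blast
  qed
qed

end
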